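(* Let $X$ be a collectionwise normal Tychonoff space containing a non-trivial convergent sequence. If $F(X)$ has a $\mathfrak{G}$-base, then $X$ is $\aleph_1$-compact. *)

theory Defs
  imports "HOL-Analysis.Analysis"
begin

definition tychonoff_space :: "'a topology \<Rightarrow> bool" where
  "tychonoff_space X \<longleftrightarrow> completely_regular_space X \<and> t1_space X"

definition discrete_family :: "'a topology \<Rightarrow> 'i set \<Rightarrow> ('i \<Rightarrow> 'a set) \<Rightarrow> bool" where
  "discrete_family X I F \<longleftrightarrow>
     (\<forall>x\<in>topspace X. \<exists>W. openin X W \<and> x \<in> W \<and>
        (\<forall>i\<in>I. \<forall>j\<in>I. W \<inter> F i \<noteq> {} \<and> W \<inter> F j \<noteq> {} \<longrightarrow> i = j))"

definition collectionwise_normal :: "'a topology \<Rightarrow> bool" where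
  "collectionwise_normal X \<longleftrightarrow> t1_space X \<and>
     (\<forall>\<F>. (\<forall>F\<in>\<F>. closedin X F) \<and> discrete_family X \<F> id \<longrightarrow>
        (\<exists>V. (\<forall>F\<in>\<F>. openin X (V F) \<and> F \<subseteq> V F) \<and> discrete_family X \<F> V))"

definition has_nontrivial_convergent_seq :: "'a topology \<Rightarrow> bool" where
  "has_nontrivial_convergent_seq X \<longleftrightarrow>
     (\<exists>s x. x \<in> topspace X \<and> range s \<subseteq> topspace X \<and> inj s \<and> (\<forall>n. s n \<noteq> x) \<and>
            limitin X s x sequentially)"

definition aleph1_compact :: "'a topology \<Rightarrow> bool" where
  "aleph1_compact X \<longleftrightarrow>
     (\<forall>A. A \<subseteq> topspace X \<and> uncountable A \<longrightarrow> (\<exists>x\<in>topspace X. x \<in> X derived_set_of A))"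

text \<open>Words over the alphabet X; a letter (x, True) stands for x, (x, False) for x^-1.\<close>
type_synonym 'a word = "('a \<times> bool) list"

definition reduced :: "'a word \<Rightarrow> bool" where
  "reduced w \<longleftrightarrow> (\<forall>i. Suc i < length w \<longrightarrow>
      \<not> (fst (w ! i) = fst (w ! Suc i) \<and> snd (w ! i) \<noteq> snd (w ! Suc i)))"

fun red :: "'a word \<Rightarrow> 'a word" where
  "red [] = []"
| "red (a # w) = (case red w of
       [] \<Rightarrow> [a]
     | b # v \<Rightarrow> (if fst a = fst b \<and> snd a \<noteq> snd b then v else a # b # v))"

definition fg_carrier :: "'a topology \<Rightarrow> 'a word set" where
  "fg_carrier X = {w. reduced w \<and> fst ` set w \<subseteq> topspace X}"

definition fg_mult :: "'a word \<Rightarrow> 'a word \<Rightarrow> 'a word" where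
  "fg_mult w v = red (w @ v)"

definition fg_inv :: "'a word \<Rightarrow> 'a word" where
  "fg_inv w = rev (map (\<lambda>(x, b). (x, \<not> b)) w)"

definition fg_unit :: "'a word" where
  "fg_unit = []"

definition fg_embed :: "'a \<Rightarrow> 'a word" where
  "fg_embed x = [(x, True)]"

definition fg_group_topology :: "'a topology \<Rightarrow> 'a word topology \<Rightarrow> bool" where
  "fg_group_topology X T \<longleftrightarrow> topspace T = fg_carrier X \<and>
     continuous_map (prod_topology T T) T (\<lambda>(w, v). fg_mult w v) \<and>
     continuous_map T T fg_inv"

text \<open>F(X): the finest group topology on F_a(X) for which the canonical map X \<rightarrow> F_a(X)
  is continuous, i.e. the topology generated by all such group topologies.\<close>
definition free_top_group :: "'a topology \<Rightarrow> 'a word topology" where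
  "free_top_group X = topology_generated_by
     (\<Union>{ {U. openin T U} | T. fg_group_topology X T \<and> continuous_map X T fg_embed })"

definition has_G_base :: "'g topology \<Rightarrow> 'g \<Rightarrow> bool" where
  "has_G_base T e \<longleftrightarrow> (\<exists>U :: (nat \<Rightarrow> nat) \<Rightarrow> 'g set.
     (\<forall>\<alpha>. U \<alpha> \<subseteq> topspace T \<and> e \<in> T interior_of (U \<alpha>)) \<and>
     (\<forall>W. openin T W \<and> e \<in> W \<longrightarrow> (\<exists>\<alpha>. U \<alpha> \<subseteq> W)) \<and>
     (\<forall>\<alpha> \<beta>. (\<forall>n. \<alpha> n \<le> \<beta> n) \<longrightarrow> U \<beta> \<subseteq> U \<alpha>))"

end

theory Submission
  imports Defs
begin


definition cancels :: "'a \<times> bool \<Rightarrow> 'a \<times> bool \<Rightarrow> bool" where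
  "cancels a b \<longleftrightarrow> fst a = fst b \<and> snd a \<noteq> snd b"

lemma reduced_succ: "reduced w \<longleftrightarrow> successively (\<lambda>a b. \<not> cancels a b) w"
  by (simp add: reduced_def successively_conv_nth cancels_def)

lemma red_set: "set (red w) \<subseteq> set w"
proof (induction w)
  case (Cons a w)
  then show ?case by (auto split: list.splits)
qed simp

lemma red_reduced: "reduced (red w)"
  unfolding reduced_succ
proof (induction w)
  case (Cons a w)
  then show ?case by (auto split: list.splits simp: cancels_def successively_Cons)
qed simp

lemma fg_inv_reduced: "reduced w \<Longrightarrow> reduced (fg_inv w)"
  unfolding reduced_succ fg_inv_def
  by (simp add: successively_map case_prod_beta cancels_def) (metis (mono_tags, lifting) successively_mono)

definition gm :: "real \<times> real \<Rightarrow> real \<times> real \<Rightarrow> real \<times> real" where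
  "gm a b = (fst a + fst b, exp (fst a) * snd b + snd a)"
definition ginv :: "real \<times> real \<Rightarrow> real \<times> real" where
  "ginv a = (- fst a, - (exp (- fst a) * snd a))"

lemma gm_assoc: "gm (gm a b) c = gm a (gm b c)"
  by (simp add: gm_def exp_add algebra_simps)
lemma gm_unit[simp]: "gm (0,0) a = a" "gm a (0,0) = a"
  by (auto simp: gm_def)
lemma gm_inv[simp]: "gm a (ginv a) = (0,0)" "gm (ginv a) a = (0,0)"
  by (auto simp: gm_def ginv_def exp_minus field_simps)
lemma ginv_ginv[simp]: "ginv (ginv a) = a"
  by (auto simp: ginv_def exp_minus field_simps)
lemma ginv_gm: "ginv (gm a b) = gm (ginv b) (ginv a)"
  by (simp add: gm_def ginv_def algebra_simps flip: exp_add)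

definition gen :: "('a \<Rightarrow> real) \<Rightarrow> ('a \<Rightarrow> real) \<Rightarrow> 'a \<times> bool \<Rightarrow> real \<times> real" where
  "gen \<phi> \<psi> a = (if snd a then (\<phi> (fst a), \<psi> (fst a)) else ginv (\<phi> (fst a), \<psi> (fst a)))"

definition hw :: "('a \<Rightarrow> real) \<Rightarrow> ('a \<Rightarrow> real) \<Rightarrow> 'a word \<Rightarrow> real \<times> real" where
  "hw \<phi> \<psi> w = foldr (\<lambda>a r. gm (gen \<phi> \<psi> a) r) w (0,0)"

lemma hw_Nil[simp]: "hw \<phi> \<psi> [] = (0,0)" and hw_Cons[simp]: "hw \<phi> \<psi> (a#w) = gm (gen \<phi> \<psi> a) (hw \<phi> \<psi> w)"
  by (auto simp: hw_def)

lemma hw_append: "hw \<phi> \<psi> (w @ v) = gm (hw \<phi> \<psi> w) (hw \<phi> \<psi> v)"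
  by (induction w) (auto simp: gm_assoc)

lemma gen_cancel: "cancels a b \<Longrightarrow> gm (gen \<phi> \<psi> a) (gen \<phi> \<psi> b) = (0,0)"
  by (cases a; cases b) (auto simp: cancels_def gen_def)

lemma hw_red: "hw \<phi> \<psi> (red w) = hw \<phi> \<psi> w"
proof (induction w)
  case (Cons a w)
  show ?case
  proof (cases "red w")
    case Nil then show ?thesis using Cons by simp
  next
    case (Cons b v)
    show ?thesis
    proof (cases "cancels a b")
      case True
      then have "red (a#w) = v" using Cons by (simp add: cancels_def)
      moreover have "hw \<phi> \<psi> (a#w) = gm (gm (gen \<phi> \<psi> a) (gen \<phi> \<psi> b)) (hw \<phi> \<psi> v)"
        using Cons \<open>hw \<phi> \<psi> (red w) = hw \<phi> \<psi> w\<close> by (simp add: gm_assoc)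
      ultimately show ?thesis using gen_cancel[OF True] by simp
    next
      case False
      then have "red (a#w) = a#b#v" using Cons by (auto simp add: cancels_def)
      then show ?thesis using Cons \<open>hw \<phi> \<psi> (red w) = hw \<phi> \<psi> w\<close> by simp
    qed
  qed
qed simp

lemma hw_mult: "hw \<phi> \<psi> (fg_mult w v) = gm (hw \<phi> \<psi> w) (hw \<phi> \<psi> v)"
  by (simp add: fg_mult_def hw_red hw_append)

lemma gen_flip: "gen \<phi> \<psi> (case a of (x, b) \<Rightarrow> (x, \<not> b)) = ginv (gen \<phi> \<psi> a)"
  by (cases a) (auto simp: gen_def)

lemma hw_inv: "hw \<phi> \<psi> (fg_inv w) = ginv (hw \<phi> \<psi> w)"
  unfolding fg_inv_def
proof (induction w)
  case Nil then show ?case by (simp add: ginv_def)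
next
  case (Cons a w)
  then show ?case by (simp add: hw_append gen_flip ginv_gm)
qed

lemma hw_embed: "hw \<phi> \<psi> (fg_embed y) = (\<phi> y, \<psi> y)"
  by (simp add: fg_embed_def gen_def)



definition TT :: "'a topology \<Rightarrow> ('a \<Rightarrow> real) \<Rightarrow> ('a \<Rightarrow> real) \<Rightarrow> 'a word topology" where
  "TT X \<phi> \<psi> = pullback_topology (fg_carrier X) (hw \<phi> \<psi>) euclidean"

lemma topspace_TT[simp]: "topspace (TT X \<phi> \<psi>) = fg_carrier X"
  by (auto simp: TT_def topspace_pullback_topology)

lemma hw_cont: "continuous_map (TT X \<phi> \<psi>) euclidean (hw \<phi> \<psi>)"
  using continuous_map_pullback[of euclidean euclidean id "fg_carrier X" "hw \<phi> \<psi>"]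
  by (simp add: TT_def)

lemma hw_cont1: "continuous_map (TT X \<phi> \<psi>) euclideanreal (\<lambda>w. fst (hw \<phi> \<psi> w))"
  using continuous_map_fst_of[of "TT X \<phi> \<psi>" euclideanreal euclideanreal "hw \<phi> \<psi>"] hw_cont[of X \<phi> \<psi>]
  by (simp add: o_def)

lemma hw_cont2: "continuous_map (TT X \<phi> \<psi>) euclideanreal (\<lambda>w. snd (hw \<phi> \<psi> w))"
  using continuous_map_snd_of[of "TT X \<phi> \<psi>" euclideanreal euclideanreal "hw \<phi> \<psi>"] hw_cont[of X \<phi> \<psi>]
  by (simp add: o_def)

lemma exp_cmap: "continuous_map Z euclideanreal f \<Longrightarrow> continuous_map Z euclideanreal (\<lambda>x. exp (f x))"
  using continuous_map_compose[of Z euclideanreal f euclideanreal exp]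
  by (simp add: o_def continuous_on_exp continuous_on_id)

lemma fg_mult_carrier: "w \<in> fg_carrier X \<Longrightarrow> v \<in> fg_carrier X \<Longrightarrow> fg_mult w v \<in> fg_carrier X"
proof -
  assume a: "w \<in> fg_carrier X" "v \<in> fg_carrier X"
  have "fst ` set (red (w @ v)) \<subseteq> fst ` set (w @ v)" using red_set[of "w @ v"] by blast
  also have "\<dots> \<subseteq> topspace X" using a by (auto simp: fg_carrier_def)
  finally show ?thesis by (simp add: fg_carrier_def fg_mult_def red_reduced)
qed

lemma fg_inv_carrier: "w \<in> fg_carrier X \<Longrightarrow> fg_inv w \<in> fg_carrier X"
  by (auto simp: fg_carrier_def fg_inv_reduced) (auto simp: fg_inv_def)

lemma fg_embed_carrier: "y \<in> topspace X \<Longrightarrow> fg_embed y \<in> fg_carrier X"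
  by (auto simp: fg_carrier_def fg_embed_def reduced_def)

lemma TT_group:
  assumes "continuous_map X euclideanreal \<phi>" "continuous_map X euclideanreal \<psi>"
  shows "fg_group_topology X (TT X \<phi> \<psi>)" "continuous_map X (TT X \<phi> \<psi>) fg_embed"
proof -
  let ?T = "TT X \<phi> \<psi>"
  let ?h = "hw \<phi> \<psi>"
  have a1: "continuous_map (prod_topology ?T ?T) euclideanreal (\<lambda>p. fst (?h (fst p)))"
    using continuous_map_compose[OF continuous_map_fst hw_cont1] by (simp add: o_def)
  have a2: "continuous_map (prod_topology ?T ?T) euclideanreal (\<lambda>p. snd (?h (fst p)))"
    using continuous_map_compose[OF continuous_map_fst hw_cont2] by (simp add: o_def)
  have b1: "continuous_map (prod_topology ?T ?T) euclideanreal (\<lambda>p. fst (?h (snd p)))"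
    using continuous_map_compose[OF continuous_map_snd hw_cont1] by (simp add: o_def)
  have b2: "continuous_map (prod_topology ?T ?T) euclideanreal (\<lambda>p. snd (?h (snd p)))"
    using continuous_map_compose[OF continuous_map_snd hw_cont2] by (simp add: o_def)
  have "continuous_map (prod_topology ?T ?T) (prod_topology euclideanreal euclideanreal)
     (\<lambda>p. (fst (?h (fst p)) + fst (?h (snd p)), exp (fst (?h (fst p))) * snd (?h (snd p)) + snd (?h (fst p))))"
    by (intro continuous_map_pairedI continuous_map_add continuous_map_real_mult exp_cmap a1 a2 b1 b2)
  then have "continuous_map (prod_topology ?T ?T) euclidean (?h \<circ> (\<lambda>(w, v). fg_mult w v))"
    by (simp add: o_def case_prod_beta hw_mult gm_def)
  then have m: "continuous_map (prod_topology ?T ?T) ?T (\<lambda>(w, v). fg_mult w v)"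
    unfolding TT_def
    by (rule continuous_map_pullback') (auto simp: fg_mult_carrier TT_def topspace_pullback_topology)
  have "continuous_map ?T (prod_topology euclideanreal euclideanreal)
     (\<lambda>w. (- fst (?h w), - (exp (- fst (?h w)) * snd (?h w))))"
    by (intro continuous_map_pairedI continuous_map_minus continuous_map_real_mult exp_cmap hw_cont1 hw_cont2)
  then have "continuous_map ?T euclidean (?h \<circ> fg_inv)"
    by (simp add: o_def hw_inv ginv_def)
  then have i: "continuous_map ?T ?T fg_inv"
    unfolding TT_def
    by (rule continuous_map_pullback') (auto simp: fg_inv_carrier TT_def topspace_pullback_topology)
  show "fg_group_topology X ?T" using m i by (simp add: fg_group_topology_def)
  have "continuous_map X (prod_topology euclideanreal euclideanreal) (\<lambda>y. (\<phi> y, \<psi> y))"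
    using assms by (intro continuous_map_pairedI)
  then have "continuous_map X euclidean (?h \<circ> fg_embed)"
    by (simp add: o_def hw_embed)
  then show "continuous_map X ?T fg_embed"
    unfolding TT_def
    by (rule continuous_map_pullback') (auto simp: fg_embed_carrier)
qed



lemma free_top_open:
  assumes "fg_group_topology X T" "continuous_map X T fg_embed" "openin T U"
  shows "openin (free_top_group X) U"
  unfolding free_top_group_def
  by (rule topology_generated_by_Basis) (use assms in blast)

lemma const_cont: "continuous_map X euclideanreal (\<lambda>y. 0)" by simp

lemma topspace_free: "topspace (free_top_group X) = fg_carrier X"
proof -
  have "\<Union>(\<Union>{ {U. openin T U} | T. fg_group_topology X T \<and> continuous_map X T fg_embed }) = fg_carrier X"
  proof
    show "\<Union>(\<Union>{ {U. openin T U} | T. fg_group_topology X T \<and> continuous_map X T fg_embed }) \<subseteq> fg_carrier X"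
      by (auto simp: fg_group_topology_def dest: openin_subset)
    have "openin (TT X (\<lambda>y. 0) (\<lambda>y. 0)) (fg_carrier X)"
      by (metis openin_topspace topspace_TT)
    then show "fg_carrier X \<subseteq> \<Union>(\<Union>{ {U. openin T U} | T. fg_group_topology X T \<and> continuous_map X T fg_embed })"
      using TT_group[OF const_cont const_cont, of X] by blast
  qed
  then show ?thesis unfolding free_top_group_def by simp
qed

lemma free_top_limit:
  assumes "\<And>T. fg_group_topology X T \<Longrightarrow> continuous_map X T fg_embed \<Longrightarrow> limitin T z e sequentially"
    and e: "e \<in> fg_carrier X"
  shows "limitin (free_top_group X) z e sequentially"
proof -
  let ?S = "\<Union>{ {U. openin T U} | T. fg_group_topology X T \<and> continuous_map X T fg_embed }"
  have "generate_topology_on ?S U \<Longrightarrow> e \<in> U \<longrightarrow> (\<forall>\<^sub>F n in sequentially. z n \<in> U)" for U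
  proof (induction rule: generate_topology_on.induct)
    case (Int a b)
    show ?case
    proof
      assume "e \<in> a \<inter> b"
      then have "\<forall>\<^sub>F n in sequentially. z n \<in> a" "\<forall>\<^sub>F n in sequentially. z n \<in> b"
        using Int.IH by auto
      then show "\<forall>\<^sub>F n in sequentially. z n \<in> a \<inter> b"
        by (simp add: eventually_conj_iff)
    qed
  next
    case (UN K)
    show ?case
    proof
      assume "e \<in> \<Union>K"
      then obtain k where k: "k \<in> K" "e \<in> k" by blast
      then have "\<forall>\<^sub>F n in sequentially. z n \<in> k" using UN.IH by blast
      then show "\<forall>\<^sub>F n in sequentially. z n \<in> \<Union>K"
        by (rule eventually_mono) (use k in blast)
    qed
  next
    case (Basis s)
    then obtain T where "fg_group_topology X T" "continuous_map X T fg_embed" "openin T s" by blast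
    then show ?case using assms(1) unfolding limitin_def by blast
  qed simp
  then show ?thesis
    unfolding limitin_def topspace_free using e
    by (simp add: free_top_group_def openin_topology_generated_by_iff)
qed

definition zw :: "'a \<Rightarrow> 'a \<Rightarrow> 'a \<Rightarrow> 'a word" where
  "zw a p y = fg_mult (fg_mult (fg_mult (fg_embed a) (fg_embed y)) (fg_inv (fg_embed p))) (fg_inv (fg_embed a))"

lemma zw_self: "zw a p p = fg_unit"
  by (simp add: zw_def fg_mult_def fg_embed_def fg_inv_def fg_unit_def)

lemma zw_limit_T:
  assumes G: "fg_group_topology X T" and E: "continuous_map X T fg_embed"
    and s: "limitin X s p sequentially" and a: "a \<in> topspace X"
  shows "limitin T (\<lambda>n. zw a p (s n)) fg_unit sequentially"
proof -
  have ts: "topspace T = fg_carrier X" using G by (simp add: fg_group_topology_def)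
  have M: "continuous_map (prod_topology T T) T (\<lambda>(w, v). fg_mult w v)"
    and I: "continuous_map T T fg_inv" using G by (auto simp: fg_group_topology_def)
  have p: "p \<in> topspace X" using s by (simp add: limitin_def)
  have cl: "continuous_map T T (\<lambda>w. fg_mult c w)" if "c \<in> topspace T" for c
    using continuous_map_compose[OF continuous_map_pairedI[OF continuous_map_const[THEN iffD2] continuous_map_id] M]
    that by (simp add: o_def)
  have cr: "continuous_map T T (\<lambda>w. fg_mult w c)" if "c \<in> topspace T" for c
    using continuous_map_compose[OF continuous_map_pairedI[OF continuous_map_id continuous_map_const[THEN iffD2]] M]
    that by (simp add: o_def)
  have ea: "fg_embed a \<in> topspace T" and ep: "fg_embed p \<in> topspace T"
    using a p by (auto simp: ts fg_embed_carrier)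
  have ia: "fg_inv (fg_embed a) \<in> topspace T" and ip: "fg_inv (fg_embed p) \<in> topspace T"
    using ea ep I by (auto simp: continuous_map_def)
  define F where "F = (\<lambda>w. fg_mult (fg_mult (fg_mult (fg_embed a) w) (fg_inv (fg_embed p))) (fg_inv (fg_embed a)))"
  have C: "continuous_map T T F"
    using continuous_map_compose[OF continuous_map_compose[OF cl[OF ea] cr[OF ip]] cr[OF ia]]
    unfolding F_def o_def .
  have L1: "limitin T (fg_embed \<circ> s) (fg_embed p) sequentially"
    by (rule continuous_map_limit[OF E s])
  have L2: "limitin T (F \<circ> (fg_embed \<circ> s)) (F (fg_embed p)) sequentially"
    by (rule continuous_map_limit[OF C L1])
  have e1: "F (fg_embed p) = fg_unit" unfolding F_def zw_def[symmetric] by (rule zw_self)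
  have e2: "F \<circ> (fg_embed \<circ> s) = (\<lambda>n. zw a p (s n))" unfolding F_def zw_def o_def by (rule refl)
  show ?thesis using L2 unfolding e1 e2 .
qed

lemma zw_limit:
  assumes s: "limitin X s p sequentially" and a: "a \<in> topspace X"
  shows "limitin (free_top_group X) (\<lambda>n. zw a p (s n)) fg_unit sequentially"
  by (rule free_top_limit, rule zw_limit_T[OF _ _ s a], assumption+) (simp add: fg_carrier_def fg_unit_def reduced_def)

lemma hw_zw: "hw \<phi> \<psi> (zw a p y) =
   gm (gm (gm (\<phi> a, \<psi> a) (\<phi> y, \<psi> y)) (ginv (\<phi> p, \<psi> p))) (ginv (\<phi> a, \<psi> a))"
  by (simp only: zw_def hw_mult hw_inv hw_embed)

lemma hw_zw_snd:
  assumes "\<phi> p = 0" "\<psi> p = 0" "\<psi> y = 0"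
  shows "snd (hw \<phi> \<psi> (zw a p y)) = \<psi> a * (1 - exp (\<phi> y))"
proof -
  have "ginv (\<phi> p, \<psi> p) = (0,0)" using assms by (simp add: ginv_def)
  then show ?thesis unfolding hw_zw using assms
    by (simp add: gm_def ginv_def algebra_simps exp_minus exp_add)
qed


lemma gbase_seq:
  fixes U :: "(nat \<Rightarrow> nat) \<Rightarrow> 'g set"
  assumes mono: "\<And>\<alpha> \<beta>. (\<forall>n. \<alpha> n \<le> \<beta> n) \<Longrightarrow> U \<beta> \<subseteq> U \<alpha>"
    and nb: "\<And>\<alpha>. e \<in> T interior_of (U \<alpha>)"
    and lim: "limitin T z e sequentially"
  shows "\<exists>k. infinite {n. z n \<in> \<Inter>{U g | g. \<forall>i<k. g i = f i}}"
proof (rule ccontr)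
  assume "\<not> ?thesis"
  then have fin: "\<And>k. finite {n. z n \<in> \<Inter>{U g | g. \<forall>i<k. g i = f i}}" by blast
  have ex: "\<exists>n g. n \<ge> k \<and> (\<forall>i<k. g i = f i) \<and> z n \<notin> U g" for k
  proof -
    let ?S = "{n. z n \<in> \<Inter>{U g | g. \<forall>i<k. g i = f i}}"
    have "infinite (UNIV - ?S)" using fin[of k] by (simp add: Diff_infinite_finite)
    then obtain n where "n \<ge> k" "n \<notin> ?S"
      unfolding infinite_nat_iff_unbounded_le by blast
    then show ?thesis by blast
  qed
  have "\<exists>nn. \<forall>k. \<exists>g. nn k \<ge> k \<and> (\<forall>i<k. g i = f i) \<and> z (nn k) \<notin> U g"
    by (rule choice) (use ex in blast)
  then obtain nn where nn: "\<forall>k. \<exists>g. nn k \<ge> k \<and> (\<forall>i<k. g i = f i) \<and> z (nn k) \<notin> U g" by blast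
  have "\<exists>gg. \<forall>k. nn k \<ge> k \<and> (\<forall>i<k. gg k i = f i) \<and> z (nn k) \<notin> U (gg k)"
    by (rule choice) (use nn in blast)
  then obtain gg where ngg0: "\<forall>k. nn k \<ge> k \<and> (\<forall>i<k. gg k i = f i) \<and> z (nn k) \<notin> U (gg k)" by blast
  then have ngg: "\<And>k. nn k \<ge> k" "\<And>k i. i < k \<Longrightarrow> gg k i = f i" "\<And>k. z (nn k) \<notin> U (gg k)"
    by auto
  define h where "h i = f i + (\<Sum>k\<le>i. gg k i)" for i
  have le: "gg k i \<le> h i" for k i
  proof (cases "k \<le> i")
    case True
    then have "gg k i \<le> (\<Sum>k\<le>i. gg k i)" by (intro member_le_sum) auto
    then show ?thesis by (simp add: h_def)
  next
    case False
    then show ?thesis using ngg(2)[of i k] by (simp add: h_def)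
  qed
  have out: "z (nn k) \<notin> U h" for k using mono[of "gg k" h] le ngg(3)[of k] by blast
  have "\<forall>\<^sub>F n in sequentially. z n \<in> T interior_of (U h)"
    using lim nb[of h] openin_interior_of unfolding limitin_def by blast
  then obtain N where "\<And>n. n \<ge> N \<Longrightarrow> z n \<in> T interior_of (U h)"
    unfolding eventually_sequentially by blast
  then have "z (nn N) \<in> T interior_of (U h)" using ngg(1)[of N] by blast
  then have "z (nn N) \<in> U h" using interior_of_subset[of T "U h"] by (rule subsetD[rotated])
  then show False using out by blast
qed

primrec chs :: "(nat \<Rightarrow> 'a set) \<Rightarrow> nat \<Rightarrow> 'a list" where
  "chs B 0 = []"
| "chs B (Suc k) = chs B k @ [SOME a. a \<in> B k \<and> a \<notin> set (chs B k)]"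

lemma sdr:
  assumes inf: "\<And>k::nat. infinite (B k)"
  shows "\<exists>\<alpha>. inj \<alpha> \<and> (\<forall>k. \<alpha> k \<in> B k)"
proof -
  define \<alpha> where "\<alpha> k = (SOME a. a \<in> B k \<and> a \<notin> set (chs B k))" for k
  have st: "set (chs B k) = \<alpha> ` {..<k}" for k
    by (induction k) (auto simp: \<alpha>_def lessThan_Suc)
  have P: "\<alpha> k \<in> B k \<and> \<alpha> k \<notin> \<alpha> ` {..<k}" for k
  proof -
    have "\<exists>a. a \<in> B k \<and> a \<notin> set (chs B k)"
    proof -
      have "infinite (B k - set (chs B k))" by (rule Diff_infinite_finite[OF finite_set inf])
      then obtain a where "a \<in> B k - set (chs B k)" using infinite_imp_nonempty by blast
      then show ?thesis by blast
    qed
    then have "\<alpha> k \<in> B k \<and> \<alpha> k \<notin> set (chs B k)"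
      unfolding \<alpha>_def by (rule someI_ex)
    then show ?thesis using st by simp
  qed
  have "inj \<alpha>"
  proof (rule injI)
    fix i j assume "\<alpha> i = \<alpha> j"
    then show "i = j" using P[of i] P[of j]
      by (metis linorder_neqE_nat lessThan_iff image_eqI)
  qed
  then show ?thesis using P by blast
qed



lemma cont_local:
  assumes "\<And>y. y \<in> topspace X \<Longrightarrow> \<exists>W g. openin X W \<and> y \<in> W \<and> continuous_map X euclideanreal g \<and> (\<forall>z\<in>W. f z = g z)"
  shows "continuous_map X euclideanreal f"
  unfolding continuous_map_eq_topcontinuous_at topcontinuous_at_def
proof (intro ballI conjI allI impI)
  fix y V assume y: "y \<in> topspace X" and V: "openin euclideanreal V \<and> f y \<in> V"
  obtain W g where W: "openin X W" "y \<in> W" "continuous_map X euclideanreal g" "\<forall>z\<in>W. f z = g z"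
    using assms[OF y] by blast
  have "openin X {z \<in> topspace X. g z \<in> V}"
    using W(3) V openin_continuous_map_preimage by blast
  moreover have "y \<in> {z \<in> topspace X. g z \<in> V}" using y V W by auto
  ultimately have "openin X ({z \<in> topspace X. g z \<in> V} \<inter> W)" "y \<in> {z \<in> topspace X. g z \<in> V} \<inter> W"
    using W(1,2) by (auto intro: openin_Int)
  moreover have "\<forall>y\<in>{z \<in> topspace X. g z \<in> V} \<inter> W. f y \<in> V" using W(4) by auto
  ultimately show "\<exists>U. openin X U \<and> y \<in> U \<and> (\<forall>y\<in>U. f y \<in> V)"
    by (intro exI[of _ "{z \<in> topspace X. g z \<in> V} \<inter> W"] conjI)
qed (simp_all add: Pi_iff)

lemma phi_exists:
  fixes X :: "'a topology" and s :: "nat \<Rightarrow> 'a"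
  assumes cr: "completely_regular_space X" and t1: "t1_space X"
    and p: "p \<in> topspace X" and sX: "range s \<subseteq> topspace X" and sp: "\<And>n. s n \<noteq> p"
  shows "\<exists>\<phi>. continuous_map X euclideanreal \<phi> \<and> \<phi> p = 0 \<and> (\<forall>n. \<phi> (s n) \<noteq> 0)"
proof -
  note cr' = cr[unfolded completely_regular_space_def, rule_format]
  have sn: "s n \<in> topspace X - {p}" for n using sX sp[of n] by auto
  have fe: "\<forall>n. \<exists>f::'a\<Rightarrow>real. continuous_map X (top_of_set {0..1}) f \<and> f (s n) = 0 \<and> f ` {p} \<subseteq> {1}"
  proof
    fix n show "\<exists>f::'a\<Rightarrow>real. continuous_map X (top_of_set {0..1}) f \<and> f (s n) = 0 \<and> f ` {p} \<subseteq> {1}"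
      by (rule cr'[OF conjI[OF closedin_t1_singleton[OF t1 p] sn]])
  qed
  from choice[OF fe] obtain f :: "nat \<Rightarrow> 'a \<Rightarrow> real" where f0: "\<forall>n. continuous_map X (top_of_set {0..1}) (f n) \<and> f n (s n) = 0 \<and> f n ` {p} \<subseteq> {1}"
    by blast
  have f: "\<And>n. continuous_map X (top_of_set {0..1}) (f n)" "\<And>n. f n (s n) = 0" "\<And>n. f n p = 1"
    using f0 by auto
  define k where "k n y = max 0 (min 1 (1 - f n y))" for n y
  have kc: "continuous_map X euclideanreal (k n)" for n
  proof -
    have "continuous_map X euclideanreal (f n)"
      using f(1)[of n] continuous_map_in_subtopology by blast
    then show ?thesis unfolding k_def
      by (intro continuous_map_real_max continuous_map_real_min continuous_map_diff) auto
  qed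
  have kb: "0 \<le> k n y" "k n y \<le> 1" for n y by (auto simp: k_def)
  have ks: "k n (s n) = 1" for n by (simp add: k_def f(2))
  have kp: "k n p = 0" for n by (simp add: k_def f(3))
  define t where "t m y = (1/2::real)^m * k m y" for m y
  have tb: "0 \<le> t m y" "t m y \<le> (1/2)^m" for m y
    using kb[of m y] by (auto simp: t_def mult_le_cancel_left1)
  have summ: "summable (\<lambda>m. t m y)" for y
    by (rule summable_comparison_test[of _ "\<lambda>m. (1/2::real)^m"]) (use tb in auto)
  define \<phi> where "\<phi> y = (\<Sum>m. t m y)" for y
  have "\<phi> p = 0" by (simp add: \<phi>_def t_def kp)
  moreover have "\<phi> (s n) \<noteq> 0" for n
  proof -
    have "sum (\<lambda>m. t m (s n)) {n} \<le> \<phi> (s n)"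
      unfolding \<phi>_def by (rule sum_le_suminf[OF summ]) (use tb in auto)
    moreover have "t n (s n) > 0" by (simp add: t_def ks)
    ultimately show ?thesis by simp
  qed
  moreover have "continuous_map X euclideanreal \<phi>"
  proof -
    have tail: "\<bar>(\<Sum>m<N. t m y) - \<phi> y\<bar> \<le> 2 * (1/2)^N" for N y
    proof -
      have sN: "summable (\<lambda>m. t (m + N) y)" by (rule summable_ignore_initial_segment[OF summ])
      have "\<phi> y = (\<Sum>m. t (m + N) y) + (\<Sum>m<N. t m y)"
        unfolding \<phi>_def by (rule suminf_split_initial_segment[OF summ])
      moreover have "(\<Sum>m. t (m + N) y) \<le> (\<Sum>m. (1/2::real)^N * (1/2)^m)"
      proof (rule suminf_le)
        show "t (m + N) y \<le> (1/2::real)^N * (1/2)^m" for m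
          using tb(2)[of "m+N" y] by (simp add: power_add mult.commute)
        show "summable (\<lambda>m. (1/2::real)^N * (1/2)^m)"
          by (rule summable_mult) simp
      qed (rule sN)
      moreover have "(\<Sum>m. (1/2::real)^N * (1/2)^m) = 2 * (1/2)^N"
        by (simp add: suminf_mult suminf_geometric)
      moreover have "0 \<le> (\<Sum>m. t (m + N) y)"
        by (rule suminf_nonneg) (auto simp: tb sN)
      ultimately show ?thesis by linarith
    qed
    have lim0: "(\<lambda>N. 2 * (1/2::real)^N) \<longlonglongrightarrow> 0"
      by (intro tendsto_mult_right_zero LIMSEQ_power_zero) simp
    show ?thesis
    proof -
      have "continuous_map X Met_TC.mtopology \<phi>"
      proof (rule Met_TC.continuous_map_uniform_limit[where f = "\<lambda>N y. \<Sum>m<N. t m y" and F = sequentially])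
        show "\<forall>\<^sub>F N in sequentially. continuous_map X Met_TC.mtopology (\<lambda>y. \<Sum>m<N. t m y)"
        proof (intro always_eventually allI)
          fix N
          have "continuous_map X euclideanreal (\<lambda>y. \<Sum>m<N. t m y)"
            unfolding t_def by (intro continuous_map_sum continuous_map_real_mult continuous_map_canonical_const kc) auto
          then show "continuous_map X Met_TC.mtopology (\<lambda>y. \<Sum>m<N. t m y)" by simp
        qed
        fix \<epsilon> :: real assume "0 < \<epsilon>"
        then have "\<forall>\<^sub>F N in sequentially. 2 * (1/2::real)^N < \<epsilon>"
          using order_tendstoD(2)[OF lim0] by blast
        then show "\<forall>\<^sub>F N in sequentially. \<forall>y\<in>topspace X. \<phi> y \<in> UNIV \<and> dist (\<Sum>m<N. t m y) (\<phi> y) < \<epsilon>"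
          by (rule eventually_mono) (use tail in \<open>auto simp: dist_real_def intro: le_less_trans\<close>)
      qed simp
      then show ?thesis by simp
    qed
  qed
  ultimately show ?thesis by blast
qed



lemma psi_exists:
  fixes X :: "'a topology" and V :: "'a \<Rightarrow> 'a set" and F :: "'a \<Rightarrow> 'a \<Rightarrow> real" and c :: "'a \<Rightarrow> real"
  assumes Vo: "\<And>a. a\<in>D \<Longrightarrow> openin X (V a)" and aV: "\<And>a. a\<in>D \<Longrightarrow> a \<in> V a"
    and disc: "\<And>y. y \<in> topspace X \<Longrightarrow> \<exists>W. openin X W \<and> y \<in> W \<and> G W"
    and G: "\<And>W a b. G W \<Longrightarrow> a \<in> D \<Longrightarrow> b \<in> D \<Longrightarrow> W \<inter> V a \<noteq> {} \<Longrightarrow> W \<inter> V b \<noteq> {} \<Longrightarrow> a = b"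
    and Fc: "\<And>a. a\<in>D \<Longrightarrow> continuous_map X euclideanreal (F a)"
    and F1: "\<And>a. a\<in>D \<Longrightarrow> F a a = 1" and F0: "\<And>a y. a\<in>D \<Longrightarrow> y \<in> topspace X \<Longrightarrow> y \<notin> V a \<Longrightarrow> F a y = 0"
  shows "\<exists>\<psi>. continuous_map X euclideanreal \<psi> \<and> (\<forall>a\<in>D. \<psi> a = c a) \<and> (\<forall>y. (\<forall>a\<in>D. y \<notin> V a) \<longrightarrow> \<psi> y = 0)"
proof -
  have disj: "a = b" if "a \<in> D" "b \<in> D" "y \<in> V a" "y \<in> V b" for a b y
  proof -
    have "y \<in> topspace X" using openin_subset[OF Vo[OF that(1)]] that(3) by blast
    then obtain W where W: "openin X W" "y \<in> W" "G W"
      using disc by blast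
    have "W \<inter> V a \<noteq> {}" "W \<inter> V b \<noteq> {}" using W(2) that(3,4) by auto
    then show ?thesis using G[OF W(3) that(1,2)] by blast
  qed
  define sel where "sel y = (SOME a. a \<in> D \<and> y \<in> V a)" for y
  have sel: "sel y = a" if "a \<in> D" "y \<in> V a" for a y
    unfolding sel_def
  proof (rule some_equality)
    show "a \<in> D \<and> y \<in> V a" using that by simp
    fix b assume "b \<in> D \<and> y \<in> V b"
    then show "b = a" using disj[of b a y] that by blast
  qed
  define \<psi> where "\<psi> y = (if \<exists>a\<in>D. y \<in> V a then c (sel y) * F (sel y) y else 0)" for y
  have \<psi>V: "\<psi> y = c a * F a y" if "a \<in> D" "y \<in> V a" for a y
    using that sel[OF that] by (auto simp: \<psi>_def)
  have \<psi>0: "\<psi> y = 0" if "\<forall>a\<in>D. y \<notin> V a" for y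
    using that by (simp add: \<psi>_def)
  have "continuous_map X euclideanreal \<psi>"
  proof (rule cont_local)
    fix y assume y: "y \<in> topspace X"
    then obtain W where W: "openin X W" "y \<in> W" "G W"
      using disc by blast
    show "\<exists>W g. openin X W \<and> y \<in> W \<and> continuous_map X euclideanreal g \<and> (\<forall>z\<in>W. \<psi> z = g z)"
    proof (cases "\<exists>b\<in>D. W \<inter> V b \<noteq> {}")
      case True
      then obtain b where b: "b \<in> D" "W \<inter> V b \<noteq> {}" by blast
      have "\<psi> z = c b * F b z" if z: "z \<in> W" for z
      proof (cases "\<exists>a\<in>D. z \<in> V a")
        case True
        then obtain a where a: "a \<in> D" "z \<in> V a" by blast
        then have "W \<inter> V a \<noteq> {}" using z by blast
        then show ?thesis using G[OF W(3) a(1) b(1)] b(2) \<psi>V[OF a] by simp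
      next
        case False
        then have "\<psi> z = 0" using \<psi>0 by blast
        moreover have "z \<in> topspace X" using openin_subset[OF W(1)] z by blast
        moreover have "z \<notin> V b" using False b(1) by blast
        ultimately show ?thesis using F0[OF b(1)] by simp
      qed
      moreover have "continuous_map X euclideanreal (\<lambda>z. c b * F b z)"
        by (intro continuous_map_real_mult continuous_map_canonical_const Fc b(1))
      ultimately show ?thesis using W(1,2) by blast
    next
      case False
      have "\<psi> z = 0" if z: "z \<in> W" for z
      proof -
        have "\<forall>a\<in>D. z \<notin> V a" using False z by blast
        then show ?thesis by (rule \<psi>0)
      qed
      then show ?thesis using W(1,2) by (intro exI[of _ W] exI[of _ "\<lambda>z. 0"]) simp
    qed
  qed
  moreover have "\<forall>a\<in>D. \<psi> a = c a" using \<psi>V aV F1 by simp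
  ultimately show ?thesis using \<psi>0 by blast
qed



theorem theorem4p10:
  fixes X :: "'a topology"
  assumes "collectionwise_normal X"
    and "tychonoff_space X"
    and "has_nontrivial_convergent_seq X"
    and "has_G_base (free_top_group X) fg_unit"
  shows "aleph1_compact X"
proof (rule ccontr)
  assume "\<not> aleph1_compact X"
  then obtain A where A: "A \<subseteq> topspace X" "uncountable A"
    and nacc: "\<And>y. y \<in> topspace X \<Longrightarrow> y \<notin> X derived_set_of A"
    unfolding aleph1_compact_def by blast
  have cr: "completely_regular_space X" and t1: "t1_space X"
    using assms(2) by (auto simp: tychonoff_space_def)
  have haus: "Hausdorff_space X"
    by (rule regular_t1_imp_Hausdorff_space[OF completely_regular_imp_regular_space[OF cr] t1])
  obtain s :: "nat \<Rightarrow> 'a" and p where sp: "p \<in> topspace X" "range s \<subseteq> topspace X" "\<And>n. s n \<noteq> p"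
    and lim: "limitin X s p sequentially"
    using assms(3) unfolding has_nontrivial_convergent_seq_def by blast
  define K where "K = insert p (range s)"
  have Kc: "closedin X K"
    unfolding K_def
    by (rule compactin_imp_closedin[OF haus compactin_sequence_with_limit[OF lim order_refl sp(2)]])
  have Kcount: "countable K" unfolding K_def by simp
  define D where "D = A - K"
  have Dunc: "uncountable D"
  proof
    assume "countable D"
    then have "countable (D \<union> K)" using Kcount by simp
    moreover have "A \<subseteq> D \<union> K" unfolding D_def by blast
    ultimately show False using A(2) countable_subset by blast
  qed
  have DX: "D \<subseteq> topspace X" using A(1) by (auto simp: D_def)
  have DK: "a \<notin> K" if "a \<in> D" for a using that by (simp add: D_def)
  have isol: "\<exists>W. openin X W \<and> y \<in> W \<and> (\<forall>z\<in>A. z \<in> W \<longrightarrow> z = y)" if y: "y \<in> topspace X" for y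
  proof -
    have "y \<notin> X derived_set_of A" by (rule nacc[OF y])
    then have "\<not> (\<forall>T. y \<in> T \<and> openin X T \<longrightarrow> (\<exists>z. z \<noteq> y \<and> z \<in> A \<and> z \<in> T))"
      using y by (simp add: derived_set_of_def)
    then show ?thesis by blast
  qed
  define FF where "FF = (\<lambda>a. {a}) ` D"
  have FFc: "\<forall>F\<in>FF. closedin X F"
    using DX closedin_t1_singleton[OF t1] by (auto simp: FF_def)
  have FFd: "discrete_family X FF id"
    unfolding discrete_family_def
  proof
    fix y assume y: "y \<in> topspace X"
    obtain W where W: "openin X W" "y \<in> W" "\<forall>z\<in>A. z \<in> W \<longrightarrow> z = y" using isol[OF y] by blast
    have "\<forall>i\<in>FF. \<forall>j\<in>FF. W \<inter> id i \<noteq> {} \<and> W \<inter> id j \<noteq> {} \<longrightarrow> i = j"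
    proof (intro ballI impI)
      fix i j assume ij: "i \<in> FF" "j \<in> FF" "W \<inter> id i \<noteq> {} \<and> W \<inter> id j \<noteq> {}"
      obtain a b where ab: "a \<in> D" "b \<in> D" "i = {a}" "j = {b}" using ij(1,2) by (auto simp: FF_def)
      have "a \<in> W" "b \<in> W" using ij(3) ab by auto
      moreover have "a \<in> A" "b \<in> A" using ab by (auto simp: D_def)
      ultimately have "a = y" "b = y" using W(3) by auto
      then show "i = j" using ab by simp
    qed
    then show "\<exists>W. openin X W \<and> y \<in> W \<and> (\<forall>i\<in>FF. \<forall>j\<in>FF. W \<inter> id i \<noteq> {} \<and> W \<inter> id j \<noteq> {} \<longrightarrow> i = j)"
      using W(1,2) by blast
  qed
  obtain V where V: "\<forall>F\<in>FF. openin X (V F) \<and> F \<subseteq> V F" and Vd: "discrete_family X FF V"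
    using assms(1) FFc FFd unfolding collectionwise_normal_def by blast
  define V' where "V' a = V {a} - K" for a
  have V'o: "openin X (V' a)" if "a \<in> D" for a
    unfolding V'_def using V that Kc by (auto simp: FF_def intro: openin_diff)
  have aV': "a \<in> V' a" if "a \<in> D" for a
    unfolding V'_def using V that DK[OF that] by (auto simp: FF_def)
  define GW where "GW W \<longleftrightarrow> (\<forall>i\<in>FF. \<forall>j\<in>FF. W \<inter> V i \<noteq> {} \<and> W \<inter> V j \<noteq> {} \<longrightarrow> i = j)" for W
  have disc: "\<exists>W. openin X W \<and> y \<in> W \<and> GW W" if "y \<in> topspace X" for y
    using Vd that unfolding discrete_family_def GW_def by blast
  have GWD: "a = b" if "GW W" "a \<in> D" "b \<in> D" "W \<inter> V' a \<noteq> {}" "W \<inter> V' b \<noteq> {}" for W a b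
  proof -
    have "{a} \<in> FF" "{b} \<in> FF" using that(2,3) by (auto simp: FF_def)
    moreover have "W \<inter> V {a} \<noteq> {}" "W \<inter> V {b} \<noteq> {}" using that(4,5) by (auto simp: V'_def)
    ultimately have "{a} = {b}" using that(1) unfolding GW_def by blast
    then show ?thesis by simp
  qed
  have V'K: "y \<notin> V' a" if "y \<in> K" for y a using that by (simp add: V'_def)
  have fex: "\<exists>g::'a\<Rightarrow>real. continuous_map X (top_of_set {0..1}) g \<and> g a = 0 \<and> g ` (topspace X - V' a) \<subseteq> {1}"
    if a: "a \<in> D" for a
  proof -
    note cr' = cr[unfolded completely_regular_space_def, rule_format]
    have "closedin X (topspace X - V' a)" using V'o[OF a] by (rule closedin_diff[OF closedin_topspace])
    moreover have "a \<in> topspace X - (topspace X - V' a)" using aV'[OF a] DX a by auto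
    ultimately show ?thesis using cr'[OF conjI] by blast
  qed
  have "\<forall>a. \<exists>g::'a\<Rightarrow>real. a \<in> D \<longrightarrow> continuous_map X (top_of_set {0..1}) g \<and> g a = 0 \<and> g ` (topspace X - V' a) \<subseteq> {1}"
    using fex by blast
  from choice[OF this] obtain g :: "'a \<Rightarrow> 'a \<Rightarrow> real" where
    g: "\<forall>a. a \<in> D \<longrightarrow> continuous_map X (top_of_set {0..1}) (g a) \<and> g a a = 0 \<and> g a ` (topspace X - V' a) \<subseteq> {1}"
    by blast
  define Fa where "Fa a y = 1 - g a y" for a y
  have Fac: "continuous_map X euclideanreal (Fa a)" if "a \<in> D" for a
  proof -
    have "continuous_map X euclideanreal (g a)"
      using g that continuous_map_in_subtopology by blast
    then show ?thesis unfolding Fa_def by (intro continuous_map_diff) auto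
  qed
  have Fa1: "Fa a a = 1" if "a \<in> D" for a using g that by (simp add: Fa_def)
  have Fa0: "Fa a y = 0" if "a \<in> D" "y \<in> topspace X" "y \<notin> V' a" for a y
    using g that by (auto simp: Fa_def)
  obtain \<phi> where \<phi>0: "continuous_map X euclideanreal \<phi> \<and> \<phi> p = 0 \<and> (\<forall>n. \<phi> (s n) \<noteq> 0)"
    using phi_exists[OF cr t1 sp(1,2) sp(3)] by (elim exE)
  have \<phi>: "continuous_map X euclideanreal \<phi>" "\<phi> p = 0" "\<And>n. \<phi> (s n) \<noteq> 0"
    using \<phi>0 by auto
  obtain U :: "(nat \<Rightarrow> nat) \<Rightarrow> 'a word set" where
    U0: "(\<forall>\<alpha>. U \<alpha> \<subseteq> topspace (free_top_group X) \<and> fg_unit \<in> (free_top_group X) interior_of (U \<alpha>)) \<and>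
     (\<forall>W. openin (free_top_group X) W \<and> fg_unit \<in> W \<longrightarrow> (\<exists>\<alpha>. U \<alpha> \<subseteq> W)) \<and>
     (\<forall>\<alpha> \<beta>. (\<forall>n. \<alpha> n \<le> \<beta> n) \<longrightarrow> U \<beta> \<subseteq> U \<alpha>)"
    using assms(4) unfolding has_G_base_def by (elim exE)
  have U1: "\<And>\<alpha>. fg_unit \<in> (free_top_group X) interior_of (U \<alpha>)"
    and U2: "\<And>W. openin (free_top_group X) W \<Longrightarrow> fg_unit \<in> W \<Longrightarrow> (\<exists>\<alpha>. U \<alpha> \<subseteq> W)"
    and U3: "\<And>\<alpha> \<beta>. (\<forall>n. \<alpha> n \<le> \<beta> n) \<Longrightarrow> U \<beta> \<subseteq> U \<alpha>"
    using U0 by auto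
  define z where "z a n = zw a p (s n)" for a n
  have zlim: "limitin (free_top_group X) (z a) fg_unit sequentially" if "a \<in> D" for a
    using zw_limit[OF lim] DX that unfolding z_def by blast
  define DL where "DL \<sigma> = \<Inter>{U g | g. \<forall>i<length \<sigma>. g i = \<sigma> ! i}" for \<sigma> :: "nat list"
  define B where "B \<sigma> = {a \<in> D. infinite {n. z a n \<in> DL \<sigma>}}" for \<sigma>
  have "countable (\<Union>\<sigma>\<in>{\<sigma>. finite (B \<sigma>)}. B \<sigma>)"
    by (intro countable_UN countableI_type) (auto intro: countable_finite)
  then obtain a0 where a0: "a0 \<in> D" "\<And>\<sigma>. finite (B \<sigma>) \<Longrightarrow> a0 \<notin> B \<sigma>"
  proof -
    assume r: "\<And>a0. a0 \<in> D \<Longrightarrow> (\<And>\<sigma>. finite (B \<sigma>) \<Longrightarrow> a0 \<notin> B \<sigma>) \<Longrightarrow> thesis"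
    assume c: "countable (\<Union>\<sigma>\<in>{\<sigma>. finite (B \<sigma>)}. B \<sigma>)"
    have "\<not> D \<subseteq> (\<Union>\<sigma>\<in>{\<sigma>. finite (B \<sigma>)}. B \<sigma>)" using c Dunc countable_subset by blast
    then obtain a where "a \<in> D" "a \<notin> (\<Union>\<sigma>\<in>{\<sigma>. finite (B \<sigma>)}. B \<sigma>)" by blast
    then show thesis using r by blast
  qed
  have Dinf: "infinite D" using Dunc countable_finite by blast
  define B' where "B' k = (if infinite (B (from_nat k)) then B (from_nat k) else D)" for k
  have "\<exists>\<alpha>. inj \<alpha> \<and> (\<forall>k. \<alpha> k \<in> B' k)"
    by (rule sdr) (simp add: B'_def Dinf)
  then obtain \<alpha> :: "nat \<Rightarrow> 'a" where \<alpha>: "inj \<alpha>" "\<And>k. \<alpha> k \<in> B' k" by blast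
  define a\<sigma> where "a\<sigma> \<sigma> = \<alpha> (to_nat \<sigma>)" for \<sigma> :: "nat list"
  have a\<sigma>B: "a\<sigma> \<sigma> \<in> B \<sigma>" if "infinite (B \<sigma>)" for \<sigma>
    using \<alpha>(2)[of "to_nat \<sigma>"] that by (simp add: a\<sigma>_def B'_def)
  have a\<sigma>inj: "\<sigma> = \<tau>" if "a\<sigma> \<sigma> = a\<sigma> \<tau>" for \<sigma> \<tau>
    using that \<alpha>(1) unfolding a\<sigma>_def by (metis inj_def from_nat_to_nat)
  define m\<sigma> where "m\<sigma> \<sigma> = (SOME m. z (a\<sigma> \<sigma>) m \<in> DL \<sigma>)" for \<sigma>
  have m\<sigma>: "z (a\<sigma> \<sigma>) (m\<sigma> \<sigma>) \<in> DL \<sigma>" if "infinite (B \<sigma>)" for \<sigma>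
  proof -
    have "infinite {n. z (a\<sigma> \<sigma>) n \<in> DL \<sigma>}" using a\<sigma>B[OF that] by (simp add: B_def)
    then obtain m where "z (a\<sigma> \<sigma>) m \<in> DL \<sigma>" using infinite_imp_nonempty by blast
    then show ?thesis unfolding m\<sigma>_def by (rule someI)
  qed
  define sel where "sel a = (SOME \<sigma>. infinite (B \<sigma>) \<and> a\<sigma> \<sigma> = a)" for a
  have sel: "sel (a\<sigma> \<sigma>) = \<sigma>" if "infinite (B \<sigma>)" for \<sigma>
    unfolding sel_def
  proof (rule some_equality)
    show "infinite (B \<sigma>) \<and> a\<sigma> \<sigma> = a\<sigma> \<sigma>" using that by simp
    fix \<tau> assume "infinite (B \<tau>) \<and> a\<sigma> \<tau> = a\<sigma> \<sigma>"
    then show "\<tau> = \<sigma>" using a\<sigma>inj by blast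
  qed
  define c where "c a = 2 / \<bar>1 - exp (\<phi> (s (m\<sigma> (sel a))))\<bar>" for a
  obtain \<psi> where \<psi>0: "continuous_map X euclideanreal \<psi> \<and> (\<forall>a\<in>D. \<psi> a = c a) \<and> (\<forall>y. (\<forall>a\<in>D. y \<notin> V' a) \<longrightarrow> \<psi> y = 0)"
  proof -
    have "\<exists>\<psi>. continuous_map X euclideanreal \<psi> \<and> (\<forall>a\<in>D. \<psi> a = c a) \<and> (\<forall>y. (\<forall>a\<in>D. y \<notin> V' a) \<longrightarrow> \<psi> y = 0)"
      apply (rule psi_exists[where D=D and X=X and V=V' and G=GW and F=Fa and c=c])
            apply (rule V'o; assumption)
           apply (rule aV'; assumption)
          apply (rule disc; assumption)
         apply (rule GWD; assumption)
        apply (rule Fac; assumption)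
       apply (rule Fa1; assumption)
      apply (rule Fa0; assumption)
      done
    then show ?thesis using that by blast
  qed
  have \<psi>: "continuous_map X euclideanreal \<psi>" "\<And>a. a \<in> D \<Longrightarrow> \<psi> a = c a"
    "\<And>y. (\<forall>a\<in>D. y \<notin> V' a) \<Longrightarrow> \<psi> y = 0"
    using \<psi>0 by auto
  have \<psi>K: "\<psi> y = 0" if "y \<in> K" for y using \<psi>(3) V'K[OF that] by blast
  let ?T = "TT X \<phi> \<psi>"
  have TG: "fg_group_topology X ?T" "continuous_map X ?T fg_embed"
    using TT_group[OF \<phi>(1) \<psi>(1)] by auto
  define Vs where "Vs = {w \<in> fg_carrier X. \<bar>snd (hw \<phi> \<psi> w)\<bar> < 1}"
  have "open {q :: real \<times> real. \<bar>snd q\<bar> < 1}"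
    by (intro open_Collect_less continuous_intros)
  then have "openin ?T Vs"
    unfolding TT_def openin_pullback_topology Vs_def
    by (intro exI[of _ "{q :: real \<times> real. \<bar>snd q\<bar> < 1}"]) auto
  then have Vso: "openin (free_top_group X) Vs" by (rule free_top_open[OF TG])
  have eV: "fg_unit \<in> Vs" by (simp add: Vs_def fg_unit_def fg_carrier_def reduced_def)
  obtain f where f: "U f \<subseteq> Vs" using U2[OF Vso eV] by (elim exE)
  obtain k where k: "infinite {n. z a0 n \<in> \<Inter>{U g | g. \<forall>i<k. g i = f i}}"
  proof -
    have "\<exists>k. infinite {n. z a0 n \<in> \<Inter>{U g | g. \<forall>i<k. g i = f i}}"
      apply (rule gbase_seq[where U=U and e=fg_unit and T="free_top_group X" and z="z a0" and f=f])
        apply (rule U3; assumption)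
       apply (rule U1)
      apply (rule zlim[OF a0(1)])
      done
    then show ?thesis using that by blast
  qed
  define \<sigma> where "\<sigma> = map f [0..<k]"
  have DL\<sigma>: "DL \<sigma> = \<Inter>{U g | g. \<forall>i<k. g i = f i}" by (simp add: DL_def \<sigma>_def)
  have "a0 \<in> B \<sigma>" using a0(1) k by (simp add: B_def DL\<sigma>)
  then have inf: "infinite (B \<sigma>)" using a0(2) by blast
  define a where "a = a\<sigma> \<sigma>"
  define m where "m = m\<sigma> \<sigma>"
  have aD: "a \<in> D" using a\<sigma>B[OF inf] by (simp add: a_def B_def)
  have "z a m \<in> DL \<sigma>" using m\<sigma>[OF inf] by (simp add: a_def m_def)
  moreover have "DL \<sigma> \<subseteq> U f" unfolding DL\<sigma> by blast
  ultimately have "z a m \<in> Vs" using f by blast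
  then have lt: "\<bar>snd (hw \<phi> \<psi> (z a m))\<bar> < 1" by (simp add: Vs_def)
  define q where "q = 1 - exp (\<phi> (s m))"
  have e1: "snd (hw \<phi> \<psi> (z a m)) = \<psi> a * q"
    unfolding z_def q_def by (rule hw_zw_snd) (use \<phi>(2) \<psi>K in \<open>auto simp: K_def\<close>)
  have e2: "\<psi> a = 2 / \<bar>q\<bar>"
    using \<psi>(2)[OF aD] sel[OF inf] by (simp add: c_def a_def m_def q_def)
  have q0: "q \<noteq> 0" using \<phi>(3)[of m] by (simp add: q_def)
  have "\<bar>snd (hw \<phi> \<psi> (z a m))\<bar> = \<bar>2 / \<bar>q\<bar> * q\<bar>" by (simp only: e1 e2)
  also have "\<dots> = 2" using q0 by (simp add: abs_mult)
  finally have "\<bar>snd (hw \<phi> \<psi> (z a m))\<bar> = 2" .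
  then show False using lt by simp
qed


end
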